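(* Let $n\ge 2$ be an integer, let $A$ be a $C^*$-algebra, and let $0<r<\frac{1}{2}$, $\theta\in[0,\infty)$ be real numbers. Suppose $f:A\to A$ satisfies $$\Big\|\mu f\Big(\frac{x+y}{2}\Big)+\mu f\Big(\frac{x-y}{2}\Big)-f(\mu x)+f(a^n)-\big(f(a)a^{n-1}+af(a)a^{n-2}+\cdots+a^{n-2}f(a)a+a^{n-1}f(a)\big)+f(w^* )-(f(w))^*\Big\|\le \theta(\|x\|^r\|y\|^r+\|a\|^{2r}+\|w\|^r)$$ for all $\mu\in\mathbb{T}$ and all $x,y,a,w\in A$. Then there exists a unique $*$-$n$-Jordan derivation $D:A\to A$ such that $$\|f(x)-D(x)\|\le \frac{3^r\theta}{2-2^r}\|x\|^{2r}$$ for all $x\in A$.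
   Context: $\mathbb{T}=\{\mu\in\mathbb{C}:|\mu|=1\}$. For an integer $n\ge 2$, an $n$-Jordan derivation on an algebra $A$ is a linear map $D:A\to A$ such that $D(a^n)=D(a)a^{n-1}+aD(a)a^{n-2}+\cdots+a^{n-2}D(a)a+a^{n-1}D(a)$ for all $a\in A$. On a $C^*$-algebra, a $*$-$n$-Jordan derivation is an $n$-Jordan derivation $D$ with $D(a^* )=(D(a))^*$ for all $a\in A$. *)

theory Defs
  imports "HOL-Analysis.Analysis"
begin

text \<open>Isabelle/HOL has no complex-vector-space
class, so complex scalar multiplication is an explicit operation compatible
with the real scaling.\<close>

class cstar_algebra = banach + real_normed_algebra +
  fixes cscale :: "complex \<Rightarrow> 'a \<Rightarrow> 'a"  (infixr "*\<^sub>C" 75)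
    and star :: "'a \<Rightarrow> 'a"
  assumes cscale_add_left: "(c + d) *\<^sub>C x = c *\<^sub>C x + d *\<^sub>C x"
    and cscale_add_right: "c *\<^sub>C (x + y) = c *\<^sub>C x + c *\<^sub>C y"
    and cscale_cscale: "c *\<^sub>C (d *\<^sub>C x) = (c * d) *\<^sub>C x"
    and cscale_one: "1 *\<^sub>C x = x"
    and cscale_of_real: "(complex_of_real t) *\<^sub>C x = t *\<^sub>R x"
    and norm_cscale: "norm (c *\<^sub>C x) = cmod c * norm x"
    and cscale_mult_left: "(c *\<^sub>C x) * y = c *\<^sub>C (x * y)"
    and cscale_mult_right: "x * (c *\<^sub>C y) = c *\<^sub>C (x * y)"
    and star_add: "star (x + y) = star x + star y"
    and star_cscale: "star (c *\<^sub>C x) = cnj c *\<^sub>C star x"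
    and star_mult: "star (x * y) = star y * star x"
    and star_star: "star (star x) = x"
    and cstar_identity: "norm (star x * x) = (norm x)\<^sup>2"

text \<open>Powers without a unit: lpow a k x = a^k x, rpow a k x = x a^k (k \<ge> 0),
so a^n = lpow a (n-1) a for n \<ge> 1.\<close>

definition lpow :: "'a::ring \<Rightarrow> nat \<Rightarrow> 'a \<Rightarrow> 'a" where
  "lpow a k = ((\<lambda>x. a * x) ^^ k)"

definition rpow :: "'a::ring \<Rightarrow> nat \<Rightarrow> 'a \<Rightarrow> 'a" where
  "rpow a k = ((\<lambda>x. x * a) ^^ k)"

definition apow :: "'a::ring \<Rightarrow> nat \<Rightarrow> 'a" where
  "apow a n = lpow a (n - 1) a"

text \<open>D(a) a^{n-1} + a D(a) a^{n-2} + ... + a^{n-1} D(a)\<close>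
definition jordan_sum :: "nat \<Rightarrow> ('a::ring \<Rightarrow> 'a) \<Rightarrow> 'a \<Rightarrow> 'a" where
  "jordan_sum n D a = (\<Sum>k<n. lpow a k (rpow a (n - 1 - k) (D a)))"

definition clinear_map :: "('a::cstar_algebra \<Rightarrow> 'a) \<Rightarrow> bool" where
  "clinear_map D \<longleftrightarrow> (\<forall>x y. D (x + y) = D x + D y) \<and> (\<forall>c x. D (c *\<^sub>C x) = c *\<^sub>C D x)"

definition n_jordan_derivation :: "nat \<Rightarrow> ('a::cstar_algebra \<Rightarrow> 'a) \<Rightarrow> bool" where
  "n_jordan_derivation n D \<longleftrightarrow> clinear_map D \<and> (\<forall>a. D (apow a n) = jordan_sum n D a)"

definition star_n_jordan_derivation :: "nat \<Rightarrow> ('a::cstar_algebra \<Rightarrow> 'a) \<Rightarrow> bool" where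
  "star_n_jordan_derivation n D \<longleftrightarrow> n_jordan_derivation n D \<and> (\<forall>a. D (star a) = star (D a))"

end

theory Submission
  imports Defs
begin

lemma cs_real: "(complex_of_real t) *\<^sub>C (x::'a::cstar_algebra) = t *\<^sub>R x" by (rule cscale_of_real)
lemma cs_nat: "(of_nat N::complex) *\<^sub>C (x::'a::cstar_algebra) = real N *\<^sub>R x"
  using cscale_of_real[of "real N" x] by simp
lemma cs_one: "(1::complex) *\<^sub>C (x::'a::cstar_algebra) = x" by (rule cscale_one)
lemma cs_m1: "(-1::complex) *\<^sub>C (x::'a::cstar_algebra) = - x"
  using cscale_of_real[of "-1" x] by simp
lemma cs_zero: "c *\<^sub>C (0::'a::cstar_algebra) = 0"
  using cscale_add_right[of c 0 0] by simp
lemma star_zero': "star (0::'a::cstar_algebra) = 0"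
  using star_add[of 0 0] by simp
lemma star_scaleR: "star (t *\<^sub>R (x::'a::cstar_algebra)) = t *\<^sub>R star x"
  using star_cscale[of "complex_of_real t" x] by (simp add: cscale_of_real)
lemma lpow_zero: "lpow a k (0::'a::ring) = 0"
  by (induct k) (simp_all add: lpow_def)
lemma rpow_zero: "rpow a k (0::'a::ring) = 0"
  by (induct k) (simp_all add: rpow_def)
lemma lpow_scale: "lpow a k (s *\<^sub>R (x::'a::real_normed_algebra)) = s *\<^sub>R lpow a k x"
  by (induct k) (simp_all add: lpow_def)
lemma rpow_scale: "rpow a k (s *\<^sub>R (x::'a::real_normed_algebra)) = s *\<^sub>R rpow a k x"
  by (induct k) (simp_all add: rpow_def)
lemma lpow_scale2: "lpow (t *\<^sub>R a) k (x::'a::real_normed_algebra) = t^k *\<^sub>R lpow a k x"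
  by (induct k) (simp_all add: lpow_def)
lemma rpow_scale2: "rpow (t *\<^sub>R a) k (x::'a::real_normed_algebra) = t^k *\<^sub>R rpow a k x"
  by (induct k) (simp_all add: rpow_def)
lemma apow_scale: "n \<ge> 1 \<Longrightarrow> apow (t *\<^sub>R (a::'a::real_normed_algebra)) n = t^n *\<^sub>R apow a n"
  unfolding apow_def by (cases n) (simp_all add: lpow_scale2 lpow_scale)
lemma jsum_scale:
  assumes "\<And>x. D (t *\<^sub>R x) = t *\<^sub>R D x" and "n \<ge> 1"
  shows "jordan_sum n D (t *\<^sub>R (a::'a::real_normed_algebra)) = t^n *\<^sub>R jordan_sum n D a"
proof -
  have "\<And>k. k < n \<Longrightarrow> lpow (t *\<^sub>R a) k (rpow (t *\<^sub>R a) (n - 1 - k) (D (t *\<^sub>R a)))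
       = t^n *\<^sub>R lpow a k (rpow a (n - 1 - k) (D a))"
  proof -
    fix k assume "k < n"
    have "t^n = t^(k + (n-1-k) + 1)"
      by (rule arg_cong[where f="\<lambda>m. t^m"]) (use \<open>k < n\<close> in simp)
    also have "\<dots> = t^k * t^(n-1-k) * t" by (simp only: power_add power_one_right)
    finally have e: "t^n = t^k * t^(n-1-k) * t" .
    show "?thesis k" by (simp add: assms(1) lpow_scale2 rpow_scale2 lpow_scale rpow_scale e)
  qed
  thus ?thesis unfolding jordan_sum_def scaleR_sum_right by (rule sum.cong[OF refl]) simp
qed
lemma vanish:
  fixes z :: "'a::real_normed_vector"
  assumes "\<forall>k::nat. norm z \<le> K * q^k" "0 < q" "q < 1"
  shows "z = 0"
proof (rule ccontr)
  assume "z \<noteq> 0"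
  hence nz: "norm z > 0" by simp
  have "norm z \<le> K" using assms(1)[rule_format, of 0] by simp
  hence K: "K > 0" using nz by linarith
  obtain k where "q^k < norm z / K" using real_arch_pow_inv[of "norm z / K" q] nz K assms by auto
  hence "q^k * K < norm z" using K by (subst (asm) pos_less_divide_eq) simp_all
  hence "K * q^k < norm z" by (simp only: mult.commute)
  thus False using assms(1)[rule_format, of k] by linarith
qed
lemma pow2powr: "((2::real)^k) powr s = (2 powr s)^k"
proof -
  have "((2::real)^k) powr s = (2 powr real k) powr s" by (simp add: powr_realpow)
  also have "\<dots> = 2 powr (s * real k)" by (simp add: powr_powr mult.commute)
  also have "\<dots> = (2 powr s) powr real k" by (simp add: powr_powr)
  also have "\<dots> = (2 powr s)^k" by (simp add: powr_realpow)
  finally show ?thesis .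
qed

lemma sum_units: assumes "cmod z \<le> 2" shows "\<exists>u v. cmod u = 1 \<and> cmod v = 1 \<and> z = u + v"
proof -
  define \<rho> where "\<rho> = cmod z"
  define w where "w = (if z = 0 then 1 else z / complex_of_real \<rho>)"
  define \<beta> where "\<beta> = sqrt (1 - \<rho>^2/4)"
  have w1: "cmod w = 1" by (simp add: w_def \<rho>_def norm_divide)
  have zw: "z = w * complex_of_real \<rho>" by (simp add: w_def \<rho>_def)
  have r4: "\<rho>^2 \<le> 4" using power_mono[of \<rho> 2 2] assms \<rho>_def by simp
  have b: "\<beta>^2 = 1 - \<rho>^2/4" unfolding \<beta>_def using r4 by simp
  have m: "cmod (Complex (\<rho>/2) \<beta>) = 1" "cmod (Complex (\<rho>/2) (-\<beta>)) = 1"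
    by (simp_all add: cmod_def b power_divide)
  have s: "Complex (\<rho>/2) \<beta> + Complex (\<rho>/2) (-\<beta>) = complex_of_real \<rho>"
    by (simp add: complex_eq_iff)
  have e: "z = w * Complex (\<rho>/2) \<beta> + w * Complex (\<rho>/2) (-\<beta>)"
    unfolding distrib_left[symmetric] s by (rule zw)
  have n1: "cmod (w * Complex (\<rho>/2) \<beta>) = 1" "cmod (w * Complex (\<rho>/2) (-\<beta>)) = 1"
    by (simp_all only: norm_mult m w1) 
  show ?thesis by (rule exI, rule exI, rule conjI[OF n1(1) conjI[OF n1(2) e]])
qed

lemma scal:
  fixes z :: "'a::real_normed_vector"
  assumes "\<forall>k::nat. (2::real)^k * norm z \<le> K * (2 powr s)^k" "s < 1"
  shows "z = 0"
proof (rule vanish)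
  show "0 < 2 powr s / 2" by simp
  have "2 powr s < 2 powr 1" by (rule powr_less_mono) (use assms in auto)
  thus "2 powr s / 2 < 1" by simp
  show "\<forall>k. norm z \<le> K * (2 powr s / 2) ^ k"
  proof
    fix k
    have "(2::real)^k * norm z \<le> K * (2 powr s)^k" using assms by blast
    hence "norm z \<le> K * (2 powr s)^k / 2^k" by (subst pos_le_divide_eq) (simp_all add: mult.commute)
    thus "norm z \<le> K * (2 powr s / 2) ^ k" by (simp add: power_divide)
  qed
qed


lemma norm_powr_scale: "t \<ge> 0 \<Longrightarrow> norm (t *\<^sub>R x) powr r = t powr r * norm x powr r"
  by (simp add: powr_mult)

lemma twopow: "((2::real)^k) powr r * ((2::real)^k) powr r = (2 powr (2*r))^k"
  by (simp add: pow2powr power_mult_distrib[symmetric] powr_add[symmetric])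

lemma twopow_ge: "n \<ge> 1 \<Longrightarrow> (2::real)^k \<le> ((2::real)^k)^n"
  by (metis one_le_numeral one_le_power power_increasing power_one_right)

theorem corollary2p8:
  fixes f :: "'a::cstar_algebra \<Rightarrow> 'a" and n :: nat and r \<theta> :: real
  assumes "n \<ge> 2" and "0 < r" and "r < 1/2" and "\<theta> \<ge> 0"
    and "\<forall>\<mu> x y a w. cmod \<mu> = 1 \<longrightarrow>
           norm (\<mu> *\<^sub>C f ((1/2) *\<^sub>R (x + y)) + \<mu> *\<^sub>C f ((1/2) *\<^sub>R (x - y)) - f (\<mu> *\<^sub>C x)
                 + f (apow a n) - jordan_sum n f a + f (star w) - star (f w))
           \<le> \<theta> * (norm x powr r * norm y powr r + norm a powr (2 * r) + norm w powr r)"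
  shows "\<exists>!D. star_n_jordan_derivation n D \<and>
           (\<forall>x. norm (f x - D x) \<le> 3 powr r * \<theta> / (2 - 2 powr r) * norm x powr (2 * r))"
proof -
  note P = assms(5)[rule_format]
  have n1: "n \<ge> 1" using assms(1) by simp
  define R where "R = f (apow 0 n) - jordan_sum n f 0 + f (star 0) - star (f 0)"
  have e1: "f 0 + f 0 - f 0 + R = 0"
    using P[of 1 0 0 0 0] unfolding R_def by (simp add: cs_one algebra_simps)
  have e2: "- f 0 + - f 0 - f 0 + R = 0"
    using P[of "-1" 0 0 0 0] unfolding R_def by (simp add: cs_m1 cs_zero algebra_simps)
  have "f 0 + f 0 + f 0 + f 0 = (f 0 + f 0 - f 0 + R) - (- f 0 + - f 0 - f 0 + R)"
    by (simp add: algebra_simps)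
  hence "f 0 + f 0 + f 0 + f 0 = 0" unfolding e1 e2 by simp
  hence "2 *\<^sub>R (2 *\<^sub>R f 0) = 0" by (simp only: scaleR_2 add.assoc)
  hence f0: "f 0 = 0" by simp
  have ap0: "apow (0::'a) n = 0" by (simp add: apow_def lpow_zero)
  have j0: "jordan_sum n f 0 = 0" by (simp add: jordan_sum_def f0 lpow_zero rpow_zero)
  have s0: "star (0::'a) = 0" by (rule star_zero')
  have H1: "f (\<mu> *\<^sub>C x) = \<mu> *\<^sub>C f ((1/2) *\<^sub>R x) + \<mu> *\<^sub>C f ((1/2) *\<^sub>R x)" if "cmod \<mu> = 1" for \<mu> x
    using P[of \<mu> x 0 0 0] that by (simp add: f0 ap0 j0 s0)
  have half: "f x = 2 *\<^sub>R f ((1/2) *\<^sub>R x)" for x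
    using H1[of 1 x] by (simp add: cs_one scaleR_2)
  have hom_mu: "f (\<mu> *\<^sub>C x) = \<mu> *\<^sub>C f x" if "cmod \<mu> = 1" for \<mu> x
    using H1[OF that, of x] H1[of 1 x] by (simp add: cs_one cscale_add_right)
  have dbl: "f (2 *\<^sub>R z) = 2 *\<^sub>R f z" for z using half[of "2 *\<^sub>R z"] by simp
  have hom2: "f ((2::real)^k *\<^sub>R z) = (2::real)^k *\<^sub>R f z" for k z
  proof (induct k)
    case (Suc k)
    have "f ((2::real)^Suc k *\<^sub>R z) = f (2 *\<^sub>R ((2::real)^k *\<^sub>R z))" by (simp only: power_Suc scaleR_scaleR)
    also have "\<dots> = 2 *\<^sub>R ((2::real)^k *\<^sub>R f z)" by (simp only: dbl Suc)
    finally show ?case by (simp only: power_Suc scaleR_scaleR)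
  qed simp
  have pow2pos: "(0::real) \<le> 2^k" for k :: nat by simp
  have g0: "f ((1/2) *\<^sub>R (x + y)) + f ((1/2) *\<^sub>R (x - y)) - f x = 0" for x y
  proof (rule scal[where s = "2*r" and K = "\<theta> * (norm x powr r * norm y powr r)"])
    show "2 * r < 1" using assms by simp
    show "\<forall>k. (2::real)^k * norm (f ((1/2) *\<^sub>R (x + y)) + f ((1/2) *\<^sub>R (x - y)) - f x)
       \<le> \<theta> * (norm x powr r * norm y powr r) * (2 powr (2 * r)) ^ k"
    proof
      fix k :: nat
      define t :: real where "t = 2^k"
      have "norm (f ((1/2) *\<^sub>R (t *\<^sub>R x + t *\<^sub>R y)) + f ((1/2) *\<^sub>R (t *\<^sub>R x - t *\<^sub>R y)) - f (t *\<^sub>R x))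
          \<le> \<theta> * (norm (t *\<^sub>R x) powr r * norm (t *\<^sub>R y) powr r)"
        using P[of 1 "t *\<^sub>R x" "t *\<^sub>R y" 0 0] by (simp add: cs_one f0 ap0 j0 s0)
      moreover have eq: "(1/2) *\<^sub>R (t *\<^sub>R x + t *\<^sub>R y) = t *\<^sub>R ((1/2) *\<^sub>R (x + y))"
         "(1/2) *\<^sub>R (t *\<^sub>R x - t *\<^sub>R y) = t *\<^sub>R ((1/2) *\<^sub>R (x - y))"
        by (simp_all add: scaleR_add_right scaleR_diff_right)
      have tnn: "0 \<le> t" by (simp add: t_def)
      have A: "f ((1/2) *\<^sub>R (t *\<^sub>R x + t *\<^sub>R y)) + f ((1/2) *\<^sub>R (t *\<^sub>R x - t *\<^sub>R y)) - f (t *\<^sub>R x)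
         = t *\<^sub>R (f ((1/2) *\<^sub>R (x + y)) + f ((1/2) *\<^sub>R (x - y)) - f x)"
      proof -
        have "f ((1/2) *\<^sub>R (t *\<^sub>R x + t *\<^sub>R y)) + f ((1/2) *\<^sub>R (t *\<^sub>R x - t *\<^sub>R y)) - f (t *\<^sub>R x)
          = t *\<^sub>R f ((1/2) *\<^sub>R (x + y)) + t *\<^sub>R f ((1/2) *\<^sub>R (x - y)) - t *\<^sub>R f x"
          unfolding eq by (simp only: t_def hom2)
        also have "\<dots> = t *\<^sub>R (f ((1/2) *\<^sub>R (x + y)) + f ((1/2) *\<^sub>R (x - y)) - f x)"
          by (simp only: scaleR_add_right scaleR_diff_right)
        finally show ?thesis .
      qed
      have B: "norm (t *\<^sub>R x) powr r * norm (t *\<^sub>R y) powr r = (t powr r * t powr r) * (norm x powr r * norm y powr r)"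
        by (simp only: norm_powr_scale[OF tnn] mult_ac)
      have C: "t powr r * t powr r = (2 powr (2*r))^k" unfolding t_def by (rule twopow)
      ultimately have "norm (t *\<^sub>R (f ((1/2) *\<^sub>R (x + y)) + f ((1/2) *\<^sub>R (x - y)) - f x))
          \<le> \<theta> * ((2 powr (2*r))^k * (norm x powr r * norm y powr r))"
        by (simp only: A B C)
      hence "t * norm (f ((1/2) *\<^sub>R (x + y)) + f ((1/2) *\<^sub>R (x - y)) - f x)
          \<le> \<theta> * ((2 powr (2*r))^k * (norm x powr r * norm y powr r))"
        by (simp only: norm_scaleR abs_of_nonneg[OF tnn])
      thus "(2::real)^k * norm (f ((1/2) *\<^sub>R (x + y)) + f ((1/2) *\<^sub>R (x - y)) - f x)
       \<le> \<theta> * (norm x powr r * norm y powr r) * (2 powr (2 * r)) ^ k"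
        by (simp only: t_def mult_ac)
    qed
  qed
  have add: "f (u + v) = f u + f v" for u v
  proof -
    have a: "(1/2) *\<^sub>R ((u + v) + (u - v)) = u" "(1/2) *\<^sub>R ((u + v) - (u - v)) = v"
    proof -
      have "(u + v) + (u - v) = 2 *\<^sub>R u" "(u + v) - (u - v) = 2 *\<^sub>R v" by (simp_all add: scaleR_2)
      thus "(1/2) *\<^sub>R ((u + v) + (u - v)) = u" "(1/2) *\<^sub>R ((u + v) - (u - v)) = v" by simp_all
    qed
    show ?thesis using g0[of "u + v" "u - v"] unfolding a by (simp add: algebra_simps)
  qed
  have homN: "f (real m *\<^sub>R x) = real m *\<^sub>R f x" for m x
  proof (induct m)
    case 0 show ?case by (simp add: f0)
  next
    case (Suc m)
    have "real (Suc m) *\<^sub>R x = x + real m *\<^sub>R x" by (simp add: scaleR_left_distrib)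
    thus ?case by (simp add: add Suc scaleR_left_distrib)
  qed
  have homC: "f (c *\<^sub>C x) = c *\<^sub>C f x" for c x
  proof -
    define N :: nat where "N = nat (ceiling (cmod c)) + 1"
    have Npos: "real N \<ge> 1" unfolding N_def by (metis le_add2 of_nat_1 of_nat_le_iff)
    have Nge: "cmod c \<le> real N" unfolding N_def
      by (simp, insert le_of_int_ceiling[of "cmod c"], linarith)
    define z where "z = c / of_nat N"
    have "cmod z \<le> 1" using Npos Nge by (simp add: z_def norm_divide divide_le_eq)
    then obtain u v where uv: "cmod u = 1" "cmod v = 1" "z = u + v"
      using sum_units[of z] by auto
    have c: "c = complex_of_real (real N) * (u + v)" using Npos by (simp add: z_def uv(3)[symmetric])
    have "f (c *\<^sub>C x) = f (real N *\<^sub>R (u *\<^sub>C x + v *\<^sub>C x))"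
      by (simp add: c cscale_cscale[symmetric] cs_nat cscale_add_left)
    also have "\<dots> = real N *\<^sub>R (u *\<^sub>C f x + v *\<^sub>C f x)"
      by (simp add: homN add hom_mu uv)
    also have "\<dots> = c *\<^sub>C f x"
      by (simp add: c cscale_cscale[symmetric] cs_nat cscale_add_left)
    finally show ?thesis .
  qed
  have homR: "f (t *\<^sub>R x) = t *\<^sub>R f x" for t x
    using homC[of "complex_of_real t" x] by (simp add: cscale_of_real)
  have clin: "clinear_map f" unfolding clinear_map_def using add homC by blast
  have jor: "f (apow a n) = jordan_sum n f a" for a
  proof -
    have "f (apow a n) - jordan_sum n f a = 0"
    proof (rule scal[where s = "2*r" and K = "\<theta> * norm a powr (2*r)"])
      show "2 * r < 1" using assms by simp
      show "\<forall>k. (2::real)^k * norm (f (apow a n) - jordan_sum n f a)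
         \<le> \<theta> * norm a powr (2*r) * (2 powr (2 * r)) ^ k"
      proof
        fix k :: nat
        define t :: real where "t = 2^k"
        have "norm (f (apow (t *\<^sub>R a) n) - jordan_sum n f (t *\<^sub>R a))
            \<le> \<theta> * norm (t *\<^sub>R a) powr (2*r)"
          using P[of 1 0 0 "t *\<^sub>R a" 0] by (simp add: cs_one f0 s0)
        moreover have Z: "f (apow (t *\<^sub>R a) n) - jordan_sum n f (t *\<^sub>R a) = t^n *\<^sub>R (f (apow a n) - jordan_sum n f a)"
          by (simp only: apow_scale[OF n1] jsum_scale[where D=f, OF homR n1] homR scaleR_diff_right)
        moreover have W: "norm (t *\<^sub>R a) powr (2*r) = t powr (2*r) * norm a powr (2*r)"
          by (rule norm_powr_scale) (simp add: t_def)
        moreover have tn: "0 \<le> t^n" by (simp add: t_def)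
        ultimately have "t^n * norm (f (apow a n) - jordan_sum n f a) \<le> \<theta> * (t powr (2*r) * norm a powr (2*r))"
          by (simp only: norm_scaleR abs_of_nonneg[OF tn])
        hence I1: "t^n * norm (f (apow a n) - jordan_sum n f a) \<le> \<theta> * norm a powr (2*r) * (2 powr (2 * r)) ^ k"
          by (simp only: t_def pow2powr mult_ac)
        have "t \<le> t^n" unfolding t_def by (rule twopow_ge[OF n1])
        hence I2: "t * norm (f (apow a n) - jordan_sum n f a) \<le> t^n * norm (f (apow a n) - jordan_sum n f a)"
          by (rule mult_right_mono) simp
        from I1 I2 show "(2::real)^k * norm (f (apow a n) - jordan_sum n f a)
         \<le> \<theta> * norm a powr (2*r) * (2 powr (2 * r)) ^ k"
          unfolding t_def by linarith
      qed
    qed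
    thus ?thesis by simp
  qed
  have str: "f (star w) = star (f w)" for w
  proof -
    have "f (star w) - star (f w) = 0"
    proof (rule scal[where s = "r" and K = "\<theta> * norm w powr r"])
      show "r < 1" using assms by simp
      show "\<forall>k. (2::real)^k * norm (f (star w) - star (f w))
         \<le> \<theta> * norm w powr r * (2 powr r) ^ k"
      proof
        fix k :: nat
        define t :: real where "t = 2^k"
        have "norm (f (star (t *\<^sub>R w)) - star (f (t *\<^sub>R w)))
            \<le> \<theta> * norm (t *\<^sub>R w) powr r"
          using P[of 1 0 0 0 "t *\<^sub>R w"] by (simp add: cs_one f0 s0 ap0 j0)
        moreover have Z: "f (star (t *\<^sub>R w)) - star (f (t *\<^sub>R w)) = t *\<^sub>R (f (star w) - star (f w))"
          by (simp only: star_scaleR homR scaleR_diff_right)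
        moreover have W: "norm (t *\<^sub>R w) powr r = t powr r * norm w powr r"
          by (rule norm_powr_scale) (simp add: t_def)
        moreover have tn: "0 \<le> t" by (simp add: t_def)
        ultimately have "t * norm (f (star w) - star (f w)) \<le> \<theta> * (t powr r * norm w powr r)"
          by (simp only: norm_scaleR abs_of_nonneg[OF tn])
        thus "(2::real)^k * norm (f (star w) - star (f w))
         \<le> \<theta> * norm w powr r * (2 powr r) ^ k"
          by (simp only: t_def pow2powr mult_ac)
      qed
    qed
    thus ?thesis by simp
  qed
  have sj: "star_n_jordan_derivation n f"
    unfolding star_n_jordan_derivation_def n_jordan_derivation_def using clin jor str by blast
  have den: "2 powr r < 2"
  proof -
    have "2 powr r < 2 powr 1" by (rule powr_less_mono) (use assms in auto)
    thus ?thesis by simp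
  qed
  show ?thesis
  proof (rule ex1I[of _ f])
    show "star_n_jordan_derivation n f \<and>
      (\<forall>x. norm (f x - f x) \<le> 3 powr r * \<theta> / (2 - 2 powr r) * norm x powr (2 * r))"
    proof (intro conjI sj allI)
      fix x :: 'a
      have "0 \<le> 3 powr r * \<theta> / (2 - 2 powr r) * norm x powr (2 * r)"
        by (intro mult_nonneg_nonneg divide_nonneg_nonneg) (use den assms(4) in auto)
      thus "norm (f x - f x) \<le> 3 powr r * \<theta> / (2 - 2 powr r) * norm x powr (2 * r)" by simp
    qed
  next
    fix D assume D: "star_n_jordan_derivation n D \<and>
      (\<forall>x. norm (f x - D x) \<le> 3 powr r * \<theta> / (2 - 2 powr r) * norm x powr (2 * r))"
    define C where "C = 3 powr r * \<theta> / (2 - 2 powr r)"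
    have cD: "clinear_map D" using D unfolding star_n_jordan_derivation_def n_jordan_derivation_def by blast
    have csD: "\<forall>c x. D (c *\<^sub>C x) = c *\<^sub>C D x" using cD unfolding clinear_map_def by (rule conjunct2)
    have homD: "D (t *\<^sub>R x) = t *\<^sub>R D x" for t x
      using csD[rule_format, of "complex_of_real t" x] by (simp only: cscale_of_real)
    have bd: "norm (f x - D x) \<le> C * norm x powr (2 * r)" for x
      using conjunct2[OF D] unfolding C_def by (rule spec)
    show "D = f"
    proof
      fix x
      have "f x - D x = 0"
      proof (rule scal[where s = "2*r" and K = "C * norm x powr (2*r)"])
        show "2 * r < 1" using assms by simp
        show "\<forall>k. (2::real)^k * norm (f x - D x) \<le> C * norm x powr (2*r) * (2 powr (2 * r)) ^ k"
        proof
          fix k :: nat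
          have "norm (f ((2::real)^k *\<^sub>R x) - D ((2::real)^k *\<^sub>R x)) \<le> C * norm ((2::real)^k *\<^sub>R x) powr (2 * r)"
            by (rule bd)
          moreover have Z: "f ((2::real)^k *\<^sub>R x) - D ((2::real)^k *\<^sub>R x) = (2::real)^k *\<^sub>R (f x - D x)"
            by (simp only: homD homR scaleR_diff_right)
          moreover have W: "norm ((2::real)^k *\<^sub>R x) powr (2*r) = ((2::real)^k) powr (2*r) * norm x powr (2*r)"
            by (rule norm_powr_scale) simp
          moreover have tn: "0 \<le> (2::real)^k" by simp
          ultimately have "(2::real)^k * norm (f x - D x) \<le> C * (((2::real)^k) powr (2*r) * norm x powr (2*r))"
            by (simp only: norm_scaleR abs_of_nonneg[OF tn])
          thus "(2::real)^k * norm (f x - D x) \<le> C * norm x powr (2*r) * (2 powr (2 * r)) ^ k"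
            by (simp only: pow2powr mult_ac)
        qed
      qed
      thus "D x = f x" by simp
    qed
  qed
qed
end
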